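(* Let $y\in\tilde W$ and $s\in\tilde{\mathbb S}$ with $\ell(sy\delta(s))=\ell(y)$. If $y\mathbf a$ is a $(J,w,\delta)$-alcove (for some $J\subset\mathbb S$ with $\delta(J)=J$ and $w\in W$), then $sy\delta(s)\mathbf a$ is a $(J,\bar sw,\delta)$-alcove, where $\bar s$ is the image of $s$ in $W$.
   Context: Let $\tilde W=X_*(T)_\Gamma\rtimes W$ be the Iwahori–Weyl group of a quasi-split connected semisimple group $G$ over a local field $F$ (finite extension of $\mathbb Q_p$ or $\mathbb F_q((\epsilon))$) split over a tamely ramified extension, relative to a maximal $L$-split torus $S$ defined over $F$ with centralizer $T$, where $L$ is the completion of the maximal unramified extension of $F$ and $\Gamma=\mathrm{Gal}(\bar L/L)$. $\delta$ is the automorphism of $\tilde W$ (and of $W$) induced by the Frobenius of $L/F$. $V=X_*(T)_\Gamma\otimes\mathbb R$; $\Sigma$ is the reduced root system with affine roots $v\mapsto\langle a,v\rangle+k$ ($a\in\Sigma,k\in\mathbb Z$), $H_{a,k}=\{v:\langle a,v\rangle=k\}$, $W=W(\Sigma)$. $\mathbf a$ is a fixed $\sigma$-stable base alcove lying in the anti-dominant chamber; $\ell$ is the length function on $\tilde W$ (number of affine root hyperplanes separating $x\mathbf a$ from $\mathbf a$); $\tilde{\mathbb S}$ the simple affine reflections; $\mathbb S$ the simple roots/simple reflections of $W$ determined by the chamber; $\Sigma^+$ positive roots; for $J\subset\mathbb S$, $\Sigma_J$ roots spanned by $J$, $\Sigma_J^+=\Sigma_J\cap\Sigma^+$, $W_J$,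 $\tilde W_J=X_*(T)_\Gamma\rtimes W_J$. For an alcove $\mathbf b$ and $a\in\Sigma$, $k(a,\mathbf b)$ is the integer $k$ with $\mathbf b$ between $H_{a,k}$ and $H_{a,k-1}$. $x\mathbf a$ is a $(J,w,\delta)$-alcove if (1) $w^{-1}x\delta(w)\in\tilde W_J$ and (2) $k(a,x\mathbf a)\ge k(a,\mathbf a)$ for all $a\in w(\Sigma^+\setminus\Sigma_J^+)$ (this is equivalent to the group-theoretic condition $\mathbf U_a(L)\cap xIx^{-1}\subseteq\mathbf U_a(L)\cap I$ for root subgroups, with $I$ the Iwahori of $\mathbf a$). *)

theory Defs
  imports "HOL-Analysis.Analysis"
begin

text \<open>Combinatorial model of the Iwahori-Weyl group acting on the apartment
  V (a Euclidean space 'v).  Roots are identified with vectors of V via a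
  W- and sigma-invariant inner product, so the pairing is the inner product.\<close>

definition root_refl :: "'v::euclidean_space \<Rightarrow> 'v \<Rightarrow> 'v" where
  "root_refl a v = v - (2 * (a \<bullet> v) / (a \<bullet> a)) *\<^sub>R a"

definition coroot :: "'v::euclidean_space \<Rightarrow> 'v" where
  "coroot a = (2 / (a \<bullet> a)) *\<^sub>R a"

definition aff_refl :: "'v::euclidean_space \<Rightarrow> int \<Rightarrow> 'v \<Rightarrow> 'v" where
  "aff_refl a k v = v - (a \<bullet> v - real_of_int k) *\<^sub>R coroot a"

inductive_set refl_group :: "'v::euclidean_space set \<Rightarrow> ('v \<Rightarrow> 'v) set" for A where
  id_in: "id \<in> refl_group A"
| step: "a \<in> A \<Longrightarrow> u \<in> refl_group A \<Longrightarrow> root_refl a \<circ> u \<in> refl_group A"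

definition reduced_root_system :: "'v::euclidean_space set \<Rightarrow> bool" where
  "reduced_root_system R \<longleftrightarrow> finite R \<and> 0 \<notin> R \<and> span R = UNIV
     \<and> (\<forall>a\<in>R. \<forall>b\<in>R. root_refl a b \<in> R)
     \<and> (\<forall>a\<in>R. \<forall>b\<in>R. 2 * (a \<bullet> b) / (a \<bullet> a) \<in> \<int>)
     \<and> (\<forall>a\<in>R. \<forall>c::real. c *\<^sub>R a \<in> R \<longrightarrow> c = 1 \<or> c = -1)"

definition positive_system :: "'v::euclidean_space set \<Rightarrow> 'v set \<Rightarrow> bool" where
  "positive_system R P \<longleftrightarrow> (\<exists>g. (\<forall>a\<in>R. a \<bullet> g \<noteq> 0) \<and> P = {a\<in>R. a \<bullet> g > 0})"

definition simple_roots :: "'v::euclidean_space set \<Rightarrow> 'v set" where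
  "simple_roots P = {a\<in>P. \<not> (\<exists>b\<in>P. \<exists>c\<in>P. a = b + c)}"

definition coroot_lattice :: "'v::euclidean_space set \<Rightarrow> 'v set" where
  "coroot_lattice R = {v. \<exists>c::'v \<Rightarrow> int. v = (\<Sum>a\<in>R. of_int (c a) *\<^sub>R coroot a)}"

text \<open>Image of X_*(T)_Gamma in V: a subgroup between the coroot lattice and
  the coweight lattice.\<close>
definition admissible_lattice :: "'v::euclidean_space set \<Rightarrow> 'v set \<Rightarrow> bool" where
  "admissible_lattice R L \<longleftrightarrow> 0 \<in> L \<and> (\<forall>x\<in>L. \<forall>y\<in>L. x + y \<in> L \<and> - x \<in> L)
     \<and> coroot_lattice R \<subseteq> L \<and> (\<forall>t\<in>L. \<forall>a\<in>R. a \<bullet> t \<in> \<int>)"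

text \<open>Base alcove: the alcove in the anti-dominant chamber whose closure contains 0.\<close>
definition base_alcove :: "'v::euclidean_space set \<Rightarrow> 'v set" where
  "base_alcove P = {v. \<forall>a\<in>P. -1 < a \<bullet> v \<and> a \<bullet> v < 0}"

definition iw_sub :: "'v::euclidean_space set \<Rightarrow> ('v \<Rightarrow> 'v) set \<Rightarrow> ('v \<Rightarrow> 'v) set" where
  "iw_sub L W0 = {(\<lambda>v. t + u v) | t u. t \<in> L \<and> u \<in> W0}"

abbreviation iw_group :: "'v::euclidean_space set \<Rightarrow> 'v set \<Rightarrow> ('v \<Rightarrow> 'v) set" where
  "iw_group R L \<equiv> iw_sub L (refl_group R)"

definition frob :: "('v \<Rightarrow> 'v) \<Rightarrow> ('v \<Rightarrow> 'v) \<Rightarrow> ('v \<Rightarrow> 'v)" where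
  "frob \<sigma> x = \<sigma> \<circ> x \<circ> inv \<sigma>"

definition linpart :: "('v::real_vector \<Rightarrow> 'v) \<Rightarrow> 'v \<Rightarrow> 'v" where
  "linpart x = (\<lambda>v. x v - x 0)"

definition hyp_separates :: "'v::euclidean_space \<Rightarrow> int \<Rightarrow> 'v set \<Rightarrow> 'v set \<Rightarrow> bool" where
  "hyp_separates a k A B \<longleftrightarrow>
     ((\<forall>p\<in>A. a \<bullet> p < real_of_int k) \<and> (\<forall>q\<in>B. a \<bullet> q > real_of_int k))
   \<or> ((\<forall>p\<in>A. a \<bullet> p > real_of_int k) \<and> (\<forall>q\<in>B. a \<bullet> q < real_of_int k))"

text \<open>Length: number of affine root hyperplanes separating x a from a
  (each hyperplane H_{a,k} = H_{-a,-k} counted once, via positive a).\<close>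
definition iw_length :: "'v::euclidean_space set \<Rightarrow> ('v \<Rightarrow> 'v) \<Rightarrow> nat" where
  "iw_length P x = card {(a, k). a \<in> P \<and> hyp_separates a k (base_alcove P) (x ` base_alcove P)}"

definition alcove_k :: "'v::euclidean_space \<Rightarrow> 'v set \<Rightarrow> int" where
  "alcove_k a B = (THE k::int. \<forall>v\<in>B. real_of_int k - 1 < a \<bullet> v \<and> a \<bullet> v < real_of_int k)"

definition is_wall :: "'v::euclidean_space set \<Rightarrow> 'v set \<Rightarrow> 'v \<Rightarrow> int \<Rightarrow> bool" where
  "is_wall R A a k \<longleftrightarrow> (\<exists>p\<in>closure A. a \<bullet> p = real_of_int k \<and>
     (\<forall>b\<in>R. \<forall>m::int. b \<bullet> p = real_of_int m \<longrightarrow> (b = a \<and> m = k) \<or> (b = - a \<and> m = - k)))"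

definition simple_aff_refls :: "'v::euclidean_space set \<Rightarrow> 'v set \<Rightarrow> ('v \<Rightarrow> 'v) set" where
  "simple_aff_refls R P = {aff_refl a k | a k. a \<in> R \<and> is_wall R (base_alcove P) a k}"

definition roots_J :: "'v::euclidean_space set \<Rightarrow> 'v set \<Rightarrow> 'v set" where
  "roots_J R J = {b\<in>R. b \<in> span J}"

definition JWD_alcove :: "'v::euclidean_space set \<Rightarrow> 'v set \<Rightarrow> 'v set \<Rightarrow> ('v \<Rightarrow> 'v)
    \<Rightarrow> 'v set \<Rightarrow> ('v \<Rightarrow> 'v) \<Rightarrow> ('v \<Rightarrow> 'v) \<Rightarrow> bool" where
  "JWD_alcove R P L \<sigma> J w x \<longleftrightarrow>
     inv w \<circ> x \<circ> frob \<sigma> w \<in> iw_sub L (refl_group J)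
   \<and> (\<forall>a \<in> w ` (P - (roots_J R J \<inter> P)). alcove_k a (x ` base_alcove P) \<ge> alcove_k a (base_alcove P))"

definition iw_datum :: "'v::euclidean_space set \<Rightarrow> 'v set \<Rightarrow> 'v set \<Rightarrow> ('v \<Rightarrow> 'v) \<Rightarrow> bool" where
  "iw_datum R P L \<sigma> \<longleftrightarrow> reduced_root_system R \<and> positive_system R P \<and> admissible_lattice R L
     \<and> linear \<sigma> \<and> (\<forall>v. norm (\<sigma> v) = norm v) \<and> \<sigma> ` R = R \<and> \<sigma> ` L = L
     \<and> \<sigma> ` base_alcove P = base_alcove P"

end

theory Submission
  imports Defs
begin


lemma rr_neg_self: "a \<noteq> 0 \<Longrightarrow> root_refl a a = - a"
  unfolding root_refl_def by (simp add: scaleR_2)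

lemma rr_invol: "a \<noteq> 0 \<Longrightarrow> root_refl a (root_refl a v) = v"
  unfolding root_refl_def
  by (simp add: inner_diff_right algebra_simps field_simps)

lemma rr_linear: "linear (root_refl a)"
  unfolding root_refl_def
  by (intro linearI) (simp_all add: inner_add_right add_divide_distrib scaleR_add_left algebra_simps)

lemma rr_inner: "a \<noteq> 0 \<Longrightarrow> root_refl a x \<bullet> root_refl a y = x \<bullet> y"
  unfolding root_refl_def
  by (simp add: inner_diff_left inner_diff_right inner_commute field_simps power2_eq_square)




abbreviation "OT \<equiv> orthogonal_transformation"

lemma OT_rr: "a \<noteq> 0 \<Longrightarrow> OT (root_refl a)"
  unfolding orthogonal_transformation_def using rr_linear rr_inner by blast

lemma OT_id: "OT id" by (simp add: orthogonal_transformation_def linear_id)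

lemma rr_bij: "a \<noteq> 0 \<Longrightarrow> bij (root_refl a)"
  using OT_rr orthogonal_transformation_bij by blast

lemma rr_inv: "a \<noteq> 0 \<Longrightarrow> inv (root_refl a) = root_refl a"
  by (metis rr_invol inv_equality)




locale iwd =
  fixes R P L :: "'v::euclidean_space set" and \<sigma> :: "'v \<Rightarrow> 'v"
  assumes datum: "iw_datum R P L \<sigma>"
begin

lemma rrs: "reduced_root_system R" using datum by (simp add: iw_datum_def)
lemma finR: "finite R" using rrs by (simp add: reduced_root_system_def)
lemma zR: "0 \<notin> R" using rrs by (simp add: reduced_root_system_def)
lemma nzR: "a \<in> R \<Longrightarrow> a \<noteq> 0" using zR by auto
lemma rrR: "a \<in> R \<Longrightarrow> b \<in> R \<Longrightarrow> root_refl a b \<in> R"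
  using rrs by (simp add: reduced_root_system_def)
lemma cartan: "a \<in> R \<Longrightarrow> b \<in> R \<Longrightarrow> 2 * (a \<bullet> b) / (a \<bullet> a) \<in> \<int>"
  using rrs by (simp add: reduced_root_system_def)
lemma reduced: "a \<in> R \<Longrightarrow> c *\<^sub>R a \<in> R \<Longrightarrow> c = 1 \<or> c = -1"
  using rrs by (simp add: reduced_root_system_def)
lemma negR: "a \<in> R \<Longrightarrow> - a \<in> R"
  using rrR[of a a] rr_neg_self nzR by metis
lemma aa_pos: "a \<in> R \<Longrightarrow> a \<bullet> a > 0" using nzR by simp

lemma chamber: "\<exists>g. (\<forall>a\<in>R. a \<bullet> g \<noteq> 0) \<and> P = {a\<in>R. a \<bullet> g > 0}"
  using datum by (simp add: iw_datum_def positive_system_def)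

lemma PR: "P \<subseteq> R" using chamber by auto
lemma finP: "finite P" using PR finR finite_subset by blast
lemma pos_neg: "a \<in> R \<Longrightarrow> a \<notin> P \<Longrightarrow> - a \<in> P"
  using chamber negR by (smt (verit, ccfv_SIG) inner_minus_left mem_Collect_eq)
lemma pos_not_neg: "a \<in> P \<Longrightarrow> - a \<notin> P"
  using chamber by (smt (verit, ccfv_SIG) inner_minus_left mem_Collect_eq)
lemma sumP: "b \<in> P \<Longrightarrow> c \<in> P \<Longrightarrow> b + c \<in> R \<Longrightarrow> b + c \<in> P"
  using chamber by (smt (verit, best) inner_add_left mem_Collect_eq)

abbreviation "A0 \<equiv> base_alcove P"

lemma base_ne: "\<exists>v. v \<in> A0"
proof -
  obtain g where g: "\<forall>a\<in>R. a \<bullet> g \<noteq> 0" "P = {a\<in>R. a \<bullet> g > 0}" using chamber by blast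
  define S where "S = (\<Sum>a\<in>P. a \<bullet> g)"
  have pos: "a \<in> P \<Longrightarrow> a \<bullet> g > 0" for a using g by auto
  have le: "a \<in> P \<Longrightarrow> a \<bullet> g \<le> S" for a
    unfolding S_def using finP pos by (intro member_le_sum) (auto intro: less_imp_le)
  define v where "v = (- 1 / (S + 1)) *\<^sub>R g"
  have "v \<in> A0"
    unfolding base_alcove_def
  proof (intro CollectI ballI conjI)
    fix a assume a: "a \<in> P"
    have p: "a \<bullet> g > 0" using pos a .
    have Sp: "S + 1 > 0" using le[OF a] p by linarith
    have e: "a \<bullet> v = - (a \<bullet> g) / (S + 1)" unfolding v_def by simp
    show "a \<bullet> v < 0" unfolding e using p Sp by (simp add: divide_pos_pos)
    have "(a \<bullet> g) / (S + 1) < 1" using le[OF a] Sp by (simp add: divide_less_eq)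
    thus "-1 < a \<bullet> v" unfolding e by simp
  qed
  thus ?thesis by blast
qed

lemma base_bnd:
  assumes "v \<in> A0" "a \<in> R"
  shows "(a \<in> P \<longrightarrow> -1 < a \<bullet> v \<and> a \<bullet> v < 0) \<and> (a \<notin> P \<longrightarrow> 0 < a \<bullet> v \<and> a \<bullet> v < 1)"
proof -
  have "a \<in> P \<Longrightarrow> -1 < a \<bullet> v \<and> a \<bullet> v < 0" using assms by (auto simp: base_alcove_def)
  moreover have "a \<notin> P \<Longrightarrow> 0 < a \<bullet> v \<and> a \<bullet> v < 1"
    using pos_neg[OF assms(2)] assms(1) by (auto simp: base_alcove_def)
  ultimately show ?thesis by blast
qed

end



definition AR :: "('v::euclidean_space \<Rightarrow> 'v) \<Rightarrow> 'v \<Rightarrow> 'v \<Rightarrow> int \<Rightarrow> bool" where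
  "AR f \<alpha> \<beta> c \<longleftrightarrow> (\<forall>v. \<alpha> \<bullet> f v = \<beta> \<bullet> v + real_of_int c)"

lemma AR_comp: "AR f \<alpha> \<beta> c \<Longrightarrow> AR h \<beta> \<gamma> d \<Longrightarrow> AR (f \<circ> h) \<alpha> \<gamma> (c + d)"
  unfolding AR_def by simp

lemma AR_id: "AR id \<alpha> \<alpha> 0" unfolding AR_def by simp

lemma AR_neg: "AR f \<alpha> \<beta> c \<Longrightarrow> AR f (- \<alpha>) (- \<beta>) (- c)"
  unfolding AR_def by simp

lemma AR_unique: assumes "AR f \<alpha> \<beta> c" "AR f \<alpha> \<beta>' c'" shows "\<beta> = \<beta>' \<and> c = c'"
proof -
  have e: "\<beta> \<bullet> v + real_of_int c = \<beta>' \<bullet> v + real_of_int c'" for v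
    using assms unfolding AR_def by metis
  from e[of 0] have c: "c = c'" by simp
  from e[of "\<beta> - \<beta>'"] c have "(\<beta> - \<beta>') \<bullet> (\<beta> - \<beta>') = 0" by (simp add: inner_diff_left)
  thus ?thesis using c by simp
qed

definition Kid :: "'v set \<Rightarrow> 'v \<Rightarrow> int" where "Kid P b = (if b \<in> P then 0 else 1)"

context iwd begin

lemma Kid_neg: "b \<in> R \<Longrightarrow> Kid P (- b) = 1 - Kid P b"
  unfolding Kid_def using pos_neg pos_not_neg by force

lemma K_point:
  assumes "AR f \<alpha> \<beta> c" "\<beta> \<in> R" "q \<in> A0"
  shows "real_of_int (c + Kid P \<beta>) - 1 < \<alpha> \<bullet> f q \<and> \<alpha> \<bullet> f q < real_of_int (c + Kid P \<beta>)"
  using base_bnd[OF assms(3,2)] assms(1) unfolding AR_def Kid_def by auto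

lemma int_unique: "real_of_int k - 1 < x \<Longrightarrow> x < real_of_int k \<Longrightarrow> real_of_int k' - 1 < x \<Longrightarrow> x < real_of_int k' \<Longrightarrow> k = k'"
proof -
  assume a: "real_of_int k - 1 < x" "x < real_of_int k" "real_of_int k' - 1 < x" "x < real_of_int k'"
  have "real_of_int k < real_of_int k' + 1" "real_of_int k' < real_of_int k + 1" using a by linarith+
  hence "k < k' + 1" "k' < k + 1" by linarith+
  thus "k = k'" by linarith
qed

lemma K_formula:
  assumes "AR f \<alpha> \<beta> c" "\<beta> \<in> R"
  shows "alcove_k \<alpha> (f ` A0) = c + Kid P \<beta>"
  unfolding alcove_k_def
proof (rule the_equality)
  show "\<forall>v\<in>f ` A0. real_of_int (c + Kid P \<beta>) - 1 < \<alpha> \<bullet> v \<and> \<alpha> \<bullet> v < real_of_int (c + Kid P \<beta>)"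
    using K_point[OF assms] by blast
  fix k assume k: "\<forall>v\<in>f ` A0. real_of_int k - 1 < \<alpha> \<bullet> v \<and> \<alpha> \<bullet> v < real_of_int k"
  obtain q where q: "q \<in> A0" using base_ne by blast
  show "k = c + Kid P \<beta>" using k q K_point[OF assms q] int_unique by blast
qed

lemma K_point2:
  assumes "AR f \<alpha> \<beta> c" "\<beta> \<in> R" "q \<in> A0"
  shows "real_of_int (alcove_k \<alpha> (f ` A0)) - 1 < \<alpha> \<bullet> f q \<and> \<alpha> \<bullet> f q < real_of_int (alcove_k \<alpha> (f ` A0))"
  using K_point[OF assms] K_formula[OF assms(1,2)] by simp

lemma sep_set:
  assumes "AR f \<alpha> \<beta> c" "\<beta> \<in> R" "\<alpha> \<in> P"
  shows "{k. hyp_separates \<alpha> k A0 (f ` A0)} = {min 0 (alcove_k \<alpha> (f ` A0)) ..< max 0 (alcove_k \<alpha> (f ` A0))}"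
proof -
  define K where "K = alcove_k \<alpha> (f ` A0)"
  obtain q where q: "q \<in> A0" using base_ne by blast
  have b0: "\<And>p. p \<in> A0 \<Longrightarrow> -1 < \<alpha> \<bullet> p \<and> \<alpha> \<bullet> p < 0" using base_bnd assms(3) PR by blast
  have b1: "\<And>p. p \<in> A0 \<Longrightarrow> real_of_int K - 1 < \<alpha> \<bullet> f p \<and> \<alpha> \<bullet> f p < real_of_int K"
    unfolding K_def using K_point2[OF assms(1,2)] by blast
  have "hyp_separates \<alpha> k A0 (f ` A0) \<longleftrightarrow> (0 \<le> k \<and> k < K) \<or> (K \<le> k \<and> k < 0)" for k
  proof
    assume h: "hyp_separates \<alpha> k A0 (f ` A0)"
    show "(0 \<le> k \<and> k < K) \<or> (K \<le> k \<and> k < 0)"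
    proof (cases "(\<forall>p\<in>A0. \<alpha> \<bullet> p < real_of_int k) \<and> (\<forall>v\<in>f ` A0. \<alpha> \<bullet> v > real_of_int k)")
      case True
      hence "\<alpha> \<bullet> q < k" "\<alpha> \<bullet> f q > k" using q by auto
      hence "-1 < real_of_int k" "real_of_int k < K" using b0[OF q] b1[OF q] by linarith+
      thus ?thesis by linarith
    next
      case False
      hence "\<alpha> \<bullet> q > k" "\<alpha> \<bullet> f q < k" using q h unfolding hyp_separates_def by auto
      hence "real_of_int k < 0" "real_of_int K - 1 < k" using b0[OF q] b1[OF q] by linarith+
      thus ?thesis by linarith
    qed
  next
    assume h: "(0 \<le> k \<and> k < K) \<or> (K \<le> k \<and> k < 0)"
    show "hyp_separates \<alpha> k A0 (f ` A0)"
    proof (cases "0 \<le> k \<and> k < K")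
      case True
      hence "real_of_int k \<ge> 0" "real_of_int k \<le> real_of_int K - 1" by linarith+
      hence "(\<forall>p\<in>A0. \<alpha> \<bullet> p < real_of_int k) \<and> (\<forall>v\<in>f ` A0. \<alpha> \<bullet> v > real_of_int k)"
        using b0 b1 by force
      thus ?thesis unfolding hyp_separates_def by blast
    next
      case False
      hence "real_of_int k \<le> -1" "real_of_int k \<ge> real_of_int K" using h by linarith+
      hence "(\<forall>p\<in>A0. \<alpha> \<bullet> p > real_of_int k) \<and> (\<forall>v\<in>f ` A0. \<alpha> \<bullet> v < real_of_int k)"
        using b0 b1 by force
      thus ?thesis unfolding hyp_separates_def by blast
    qed
  qed
  note iff = this
  have "{k. hyp_separates \<alpha> k A0 (f ` A0)} = {min 0 K ..< max 0 K}"
  proof (rule set_eqI)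
    fix k
    have "k \<in> {min 0 K ..< max 0 K} \<longleftrightarrow> (0 \<le> k \<and> k < K) \<or> (K \<le> k \<and> k < 0)"
      by (simp add: min_def max_def) arith
    thus "k \<in> {k. hyp_separates \<alpha> k A0 (f ` A0)} \<longleftrightarrow> k \<in> {min 0 K ..< max 0 K}"
      using iff[of k] by simp
  qed
  thus ?thesis by (simp add: K_def)
qed

lemma length_formula:
  assumes "\<And>\<alpha>. \<alpha> \<in> P \<Longrightarrow> \<exists>\<beta> c. \<beta> \<in> R \<and> AR f \<alpha> \<beta> c"
  shows "int (iw_length P f) = (\<Sum>\<alpha>\<in>P. \<bar>alcove_k \<alpha> (f ` A0)\<bar>)"
proof -
  have "{(a, k). a \<in> P \<and> hyp_separates a k A0 (f ` A0)} = Sigma P (\<lambda>a. {k. hyp_separates a k A0 (f ` A0)})"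
    by auto
  hence "iw_length P f = card (Sigma P (\<lambda>a. {k. hyp_separates a k A0 (f ` A0)}))"
    unfolding iw_length_def by simp
  also have "\<dots> = (\<Sum>a\<in>P. card {k. hyp_separates a k A0 (f ` A0)})"
  proof (rule card_SigmaI)
    show "finite P" by (rule finP)
    show "\<forall>a\<in>P. finite {k. hyp_separates a k A0 (f ` A0)}"
    proof
      fix a assume "a \<in> P"
      then obtain \<beta> c where "\<beta> \<in> R" "AR f a \<beta> c" using assms by blast
      thus "finite {k. hyp_separates a k A0 (f ` A0)}" using sep_set \<open>a \<in> P\<close> by simp
    qed
  qed
  finally have "int (iw_length P f) = (\<Sum>a\<in>P. int (card {k. hyp_separates a k A0 (f ` A0)}))"
    by simp
  also have "\<dots> = (\<Sum>\<alpha>\<in>P. \<bar>alcove_k \<alpha> (f ` A0)\<bar>)"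
  proof (rule sum.cong[OF refl])
    fix a assume "a \<in> P"
    then obtain \<beta> c where "\<beta> \<in> R" "AR f a \<beta> c" using assms by blast
    thus "int (card {k. hyp_separates a k A0 (f ` A0)}) = \<bar>alcove_k a (f ` A0)\<bar>"
      using sep_set \<open>a \<in> P\<close> by auto
  qed
  finally show ?thesis .
qed

end



lemma invol_image: "(\<And>x. f (f x) = x) \<Longrightarrow> f ` S \<subseteq> S \<Longrightarrow> f ` S = S"
  by (metis image_eqI subsetI subset_antisym image_subset_iff)

lemma rr_coroot: "root_refl a v = v - (a \<bullet> v) *\<^sub>R coroot a"
  unfolding root_refl_def coroot_def by (simp add: scaleR_scaleR)

lemma aff_rr: "aff_refl a k v = root_refl a v + real_of_int k *\<^sub>R coroot a"
  unfolding aff_refl_def rr_coroot by (simp add: algebra_simps)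

context iwd begin

lemma adm: "admissible_lattice R L" using datum by (simp add: iw_datum_def)
lemma L0: "0 \<in> L" using adm by (simp add: admissible_lattice_def)
lemma Ladd: "x \<in> L \<Longrightarrow> y \<in> L \<Longrightarrow> x + y \<in> L" using adm by (simp add: admissible_lattice_def)
lemma Lneg: "x \<in> L \<Longrightarrow> - x \<in> L" using adm by (simp add: admissible_lattice_def)
lemma Ldiff: "x \<in> L \<Longrightarrow> y \<in> L \<Longrightarrow> x - y \<in> L" using Ladd Lneg by (metis diff_conv_add_uminus)
lemma Lint: "t \<in> L \<Longrightarrow> a \<in> R \<Longrightarrow> a \<bullet> t \<in> \<int>" using adm by (simp add: admissible_lattice_def)

lemma Lnat: "x \<in> L \<Longrightarrow> of_nat n *\<^sub>R x \<in> L"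
  by (induction n) (simp_all add: L0 Ladd scaleR_add_left)

lemma Lmult: "x \<in> L \<Longrightarrow> of_int n *\<^sub>R x \<in> L"
proof (cases "n \<ge> 0")
  case True
  assume x: "x \<in> L"
  from True obtain m where "n = int m" by (metis nonneg_int_cases)
  thus ?thesis using Lnat[OF x, of m] by simp
next
  case False
  assume x: "x \<in> L"
  define m where "m = nat (- n)"
  have "n = - int m" using False unfolding m_def by simp
  thus ?thesis using Lneg[OF Lnat[OF x, of m]] by simp
qed

lemma coroot_L: "a \<in> R \<Longrightarrow> coroot a \<in> L"
proof -
  assume a: "a \<in> R"
  have "(\<Sum>b\<in>R. of_int (if b = a then 1 else 0) *\<^sub>R coroot b) = (\<Sum>b\<in>R. if b = a then coroot b else 0)"
    by (rule sum.cong) auto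
  also have "\<dots> = coroot a" using a finR by (simp add: sum.delta')
  finally have "coroot a = (\<Sum>b\<in>R. of_int (if b = a then 1 else 0) *\<^sub>R coroot b)" by simp
  hence "coroot a \<in> coroot_lattice R" unfolding coroot_lattice_def
    by (intro CollectI exI[of _ "\<lambda>b. if b = a then (1::int) else 0"])
  thus ?thesis using adm by (auto simp: admissible_lattice_def)
qed

lemma realint: "x \<in> \<int> \<Longrightarrow> \<exists>n::int. x = of_int n" by (metis Ints_cases)

lemma rr_L: "a \<in> R \<Longrightarrow> t \<in> L \<Longrightarrow> root_refl a t \<in> L"
proof -
  assume a: "a \<in> R" and t: "t \<in> L"
  obtain n where n: "a \<bullet> t = of_int n" using realint[OF Lint[OF t a]] by blast
  show ?thesis unfolding rr_coroot n using Ldiff[OF t Lmult[OF coroot_L[OF a]]] by simp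
qed

lemma rr_imR: "a \<in> R \<Longrightarrow> root_refl a ` R = R"
  by (rule invol_image) (auto simp: rr_invol nzR rrR)

lemma rr_imL: "a \<in> R \<Longrightarrow> root_refl a ` L = L"
  by (rule invol_image) (auto simp: rr_invol nzR rr_L)

lemma rg_props: "u \<in> refl_group A \<Longrightarrow> A \<subseteq> R \<Longrightarrow> OT u \<and> u ` R = R \<and> u ` L = L"
proof (induction rule: refl_group.induct)
  case id_in
  then show ?case by (simp add: OT_id)
next
  case (step a u)
  have aR: "a \<in> R" using step by auto
  have "OT (root_refl a \<circ> u)" using step OT_rr[OF nzR[OF aR]] orthogonal_transformation_compose by blast
  moreover have "(root_refl a \<circ> u) ` R = R"
    using step rr_imR[OF aR] image_comp[of "root_refl a" u R] by simp
  moreover have "(root_refl a \<circ> u) ` L = L"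
    using step rr_imL[OF aR] image_comp[of "root_refl a" u L] by simp
  ultimately show ?case by blast
qed

lemma OT_sigma: "OT \<sigma>" using datum by (simp add: iw_datum_def orthogonal_transformation)
lemma sigR: "\<sigma> ` R = R" using datum by (simp add: iw_datum_def)
lemma sigL: "\<sigma> ` L = L" using datum by (simp add: iw_datum_def)
lemma sigA: "\<sigma> ` A0 = A0" using datum by (simp add: iw_datum_def)
lemma sig_bij: "bij \<sigma>" using OT_sigma orthogonal_transformation_bij by blast
lemma inv_sig_im: "\<sigma> ` S = S \<Longrightarrow> inv \<sigma> ` S = S"
  using image_inv_f_f[OF bij_is_inj[OF sig_bij], of S] by simp
lemma sig_inv_apply[simp]: "\<sigma> (inv \<sigma> x) = x" using sig_bij by (simp add: bij_is_surj surj_f_inv_f)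
lemma inv_sig_apply[simp]: "inv \<sigma> (\<sigma> x) = x" using sig_bij by (simp add: bij_is_inj)

lemma OT_pos:
  assumes f: "OT f" "f ` R \<subseteq> R" "f ` A0 \<subseteq> A0" and a: "a \<in> P"
  shows "f a \<in> P"
proof (rule ccontr)
  assume n: "f a \<notin> P"
  obtain v where v: "v \<in> A0" using base_ne by blast
  have aR: "a \<in> R" using a PR by auto
  have fa: "f a \<in> R" using f(2) aR by auto
  have fv: "f v \<in> A0" using f(3) v by auto
  have "f a \<bullet> f v = a \<bullet> v" using f(1) by (simp add: orthogonal_transformation_def)
  moreover have "a \<bullet> v < 0" using base_bnd[OF v aR] a by simp
  moreover have "f a \<bullet> f v > 0" using base_bnd[OF fv fa] n by simp
  ultimately show False by simp
qed

end



context iwd begin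

lemma diff_root:
  assumes a: "a \<in> R" and b: "b \<in> R" and ab: "a \<bullet> b > 0" and np: "\<forall>k. b \<noteq> k *\<^sub>R a"
  shows "b - a \<in> R"
proof -
  have a0: "a \<bullet> a > 0" "b \<bullet> b > 0" using aa_pos a b by auto
  obtain i1 :: int where i1: "2 * (a \<bullet> b) / (a \<bullet> a) = of_int i1" using realint[OF cartan[OF a b]] by blast
  obtain i2 :: int where i2: "2 * (b \<bullet> a) / (b \<bullet> b) = of_int i2" using realint[OF cartan[OF b a]] by blast
  have p1: "i1 > 0"
  proof -
    have "2 * (a \<bullet> b) / (a \<bullet> a) > 0" using ab a0 by simp
    thus ?thesis using i1 by simp
  qed
  have p2: "i2 > 0"
  proof -
    have "2 * (b \<bullet> a) / (b \<bullet> b) > 0" using ab a0 by (simp add: inner_commute)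
    thus ?thesis using i2 by simp
  qed
  have na: "norm a > 0" "norm b > 0" using nzR a b by auto
  have cs: "\<bar>a \<bullet> b\<bar> < norm a * norm b"
  proof -
    have le: "\<bar>a \<bullet> b\<bar> \<le> norm a * norm b" by (rule Cauchy_Schwarz_ineq2)
    have "\<bar>a \<bullet> b\<bar> \<noteq> norm a * norm b"
    proof
      assume "\<bar>a \<bullet> b\<bar> = norm a * norm b"
      hence "norm a *\<^sub>R b = norm b *\<^sub>R a \<or> norm a *\<^sub>R b = - norm b *\<^sub>R a"
        using norm_cauchy_schwarz_abs_eq by blast
      moreover have "norm a *\<^sub>R b = c *\<^sub>R a \<Longrightarrow> b = (c / norm a) *\<^sub>R a" for c
      proof -
        assume "norm a *\<^sub>R b = c *\<^sub>R a"
        hence "(1 / norm a) *\<^sub>R (norm a *\<^sub>R b) = (1 / norm a) *\<^sub>R (c *\<^sub>R a)" by simp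
        thus ?thesis using na by (simp add: scaleR_scaleR)
      qed
      ultimately show False using np by (metis scaleR_minus_left)
    qed
    thus ?thesis using le by simp
  qed
  have sq: "(a \<bullet> b) * (a \<bullet> b) < (a \<bullet> a) * (b \<bullet> b)"
  proof -
    have "(a \<bullet> b) * (a \<bullet> b) = \<bar>a \<bullet> b\<bar> * \<bar>a \<bullet> b\<bar>" by simp
    also have "\<dots> < (norm a * norm b) * (norm a * norm b)"
      using cs by (intro mult_strict_mono) auto
    also have "\<dots> = (a \<bullet> a) * (b \<bullet> b)" by (simp add: power2_norm_eq_inner[symmetric] power2_eq_square)
    finally show ?thesis .
  qed
  have "of_int (i1 * i2) = (2 * (a \<bullet> b) / (a \<bullet> a)) * (2 * (b \<bullet> a) / (b \<bullet> b))" using i1 i2 by simp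
  also have "\<dots> = 4 * ((a \<bullet> b) * (a \<bullet> b)) / ((a \<bullet> a) * (b \<bullet> b))" by (simp add: inner_commute)
  also have "\<dots> < 4" using sq a0 by (simp add: divide_less_eq)
  finally have "real_of_int (i1 * i2) < real_of_int 4" by simp
  hence "i1 * i2 < 4" by (simp only: of_int_less_iff)
  hence "i1 = 1 \<or> i2 = 1"
  proof -
    assume h: "i1 * i2 < 4"
    { assume "i1 \<ge> 2" "i2 \<ge> 2"
      hence "i1 * i2 \<ge> 2 * 2" by (intro mult_mono) auto
      hence False using h by simp }
    hence "\<not> (i1 \<ge> 2 \<and> i2 \<ge> 2)" by blast
    thus ?thesis using p1 p2 by linarith
  qed
  thus ?thesis
  proof
    assume "i1 = 1"
    hence "root_refl a b = b - a" unfolding root_refl_def using i1 ab by (simp add: inner_commute)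
    thus ?thesis using rrR[OF a b] by simp
  next
    assume "i2 = 1"
    hence "root_refl b a = a - b" unfolding root_refl_def using i2 ab by (simp add: inner_commute)
    hence "a - b \<in> R" using rrR[OF b a] by simp
    thus ?thesis using negR by fastforce
  qed
qed

end



context iwd begin

lemma simpleD: "a \<in> simple_roots P \<Longrightarrow> a \<in> P \<and> \<not> (\<exists>b\<in>P. \<exists>c\<in>P. a = b + c)"
  unfolding simple_roots_def by blast

lemma no_sum_mult:
  assumes J: "J \<subseteq> simple_roots P" and aJ: "a \<in> J"
  shows "b \<in> P \<Longrightarrow> c \<in> P \<Longrightarrow> b \<notin> span J \<Longrightarrow> b + c = of_nat n *\<^sub>R a \<Longrightarrow> False"
proof (induction n arbitrary: b c)
  case 0
  hence "c = - b" by (simp add: eq_neg_iff_add_eq_0 add.commute)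
  thus False using 0 pos_not_neg by blast
next
  case (Suc n)
  have aS: "a \<in> P" and ind: "\<not> (\<exists>b\<in>P. \<exists>c\<in>P. a = b + c)" using simpleD J aJ by blast+
  have aR: "a \<in> R" using aS PR by auto
  have bR: "b \<in> R" "c \<in> R" using Suc.prems PR by auto
  have aspan: "a \<in> span J" using aJ by (simp add: span_base)
  have "(b + c) \<bullet> a = of_nat (Suc n) * (a \<bullet> a)" using Suc.prems(4) by simp
  moreover have "of_nat (Suc n) * (a \<bullet> a) > 0" using aa_pos[OF aR] by simp
  ultimately have "b \<bullet> a > 0 \<or> c \<bullet> a > 0" by (simp add: inner_add_left) linarith
  thus False
  proof
    assume ba: "b \<bullet> a > 0"
    have np: "\<forall>k. b \<noteq> k *\<^sub>R a"
    proof
      fix k show "b \<noteq> k *\<^sub>R a" using Suc.prems(3) aspan span_mul by blast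
    qed
    have d: "b - a \<in> R" using diff_root[OF aR bR(1) _ np] ba by (simp add: inner_commute)
    show False
    proof (cases "b - a \<in> P")
      case True
      have "b - a \<notin> span J"
      proof
        assume "b - a \<in> span J"
        hence "(b - a) + a \<in> span J" using aspan span_add by blast
        thus False using Suc.prems(3) by simp
      qed
      moreover have "(b - a) + c = of_nat n *\<^sub>R a" using Suc.prems(4)
        by (simp add: algebra_simps)
      ultimately show False using Suc.IH True Suc.prems(2) by blast
    next
      case False
      hence "a - b \<in> P" using pos_neg[OF d] by simp
      moreover have "a = (a - b) + b" by simp
      ultimately show False using ind Suc.prems(1) by blast
    qed
  next
    assume ca: "c \<bullet> a > 0"
    show False
    proof (cases "\<exists>k. c = k *\<^sub>R a")
      case True
      then obtain k where k: "c = k *\<^sub>R a" by blast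
      hence "k = 1 \<or> k = -1" using reduced[OF aR] bR(2) by simp
      thus False
      proof
        assume "k = 1"
        hence "b = of_nat n *\<^sub>R a" using k Suc.prems(4) by (simp add: algebra_simps)
        hence "b \<in> span J" using aspan span_mul by metis
        thus False using Suc.prems(3) by simp
      next
        assume "k = -1"
        hence "- a \<in> P" using k Suc.prems(2) by simp
        thus False using aS pos_not_neg by blast
      qed
    next
      case False
      hence np: "\<forall>k. c \<noteq> k *\<^sub>R a" by blast
      have d: "c - a \<in> R" using diff_root[OF aR bR(2) _ np] ca by (simp add: inner_commute)
      show False
      proof (cases "c - a \<in> P")
        case True
        have "b + (c - a) = of_nat n *\<^sub>R a" using Suc.prems(4)
          by (simp add: algebra_simps)
        thus False using Suc.IH True Suc.prems(1,3) by blast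
      next
        case False
        hence "a - c \<in> P" using pos_neg[OF d] by simp
        moreover have "a = (a - c) + c" by simp
        ultimately show False using ind Suc.prems(2) by blast
      qed
    qed
  qed
qed

end



context iwd begin

definition Qs :: "'v set \<Rightarrow> 'v set" where "Qs J = {b\<in>P. b \<notin> span J}"

lemma rr_pos:
  assumes J: "J \<subseteq> simple_roots P" and aJ: "a \<in> J" and b: "b \<in> P" "b \<notin> span J"
  shows "root_refl a b \<in> P"
proof (rule ccontr)
  assume n: "root_refl a b \<notin> P"
  have aS: "a \<in> P" using simpleD J aJ by blast
  have aR: "a \<in> R" using aS PR by auto
  have bR: "b \<in> R" using b PR by auto
  have rR: "root_refl a b \<in> R" using rrR[OF aR bR] .
  define c where "c = - root_refl a b"
  have cP: "c \<in> P" unfolding c_def using pos_neg[OF rR n] .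
  obtain k :: int where k: "2 * (a \<bullet> b) / (a \<bullet> a) = of_int k" using realint[OF cartan[OF aR bR]] by blast
  have bc: "b + c = of_int k *\<^sub>R a" unfolding c_def root_refl_def k[symmetric] by simp
  obtain g where g: "\<forall>a\<in>R. a \<bullet> g \<noteq> 0" "P = {a\<in>R. a \<bullet> g > 0}" using chamber by blast
  have "(b + c) \<bullet> g > 0" using b cP g by (auto simp: inner_add_left)
  hence "of_int k * (a \<bullet> g) > 0" using bc by simp
  moreover have "a \<bullet> g > 0" using aS g by auto
  ultimately have "k > 0" by (simp add: zero_less_mult_iff)
  hence "b + c = of_nat (nat k) *\<^sub>R a" using bc by simp
  thus False using no_sum_mult[OF J aJ b(1) cP b(2)] by blast
qed

lemma rr_Q:
  assumes J: "J \<subseteq> simple_roots P" and aJ: "a \<in> J"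
  shows "root_refl a ` Qs J = Qs J"
proof (rule invol_image)
  have aS: "a \<in> P" using simpleD J aJ by blast
  have aR: "a \<in> R" using aS PR by auto
  show "root_refl a (root_refl a x) = x" for x using rr_invol nzR[OF aR] by blast
  show "root_refl a ` Qs J \<subseteq> Qs J"
  proof
    fix x assume "x \<in> root_refl a ` Qs J"
    then obtain b where b: "b \<in> Qs J" and x: "x = root_refl a b" by blast
    have bP: "b \<in> P" "b \<notin> span J" using b by (auto simp: Qs_def)
    have "x \<in> P" using rr_pos[OF J aJ bP] x by simp
    moreover have "x \<notin> span J"
    proof
      assume xs: "x \<in> span J"
      have "b = x + (2 * (a \<bullet> b) / (a \<bullet> a)) *\<^sub>R a" unfolding x root_refl_def by simp
      moreover have "(2 * (a \<bullet> b) / (a \<bullet> a)) *\<^sub>R a \<in> span J" using aJ by (simp add: span_base span_mul)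
      ultimately have "b \<in> span J" using xs span_add by metis
      thus False using bP by simp
    qed
    ultimately show "x \<in> Qs J" by (simp add: Qs_def)
  qed
qed

lemma rgJ_Q:
  assumes J: "J \<subseteq> simple_roots P"
  shows "u \<in> refl_group J \<Longrightarrow> u ` Qs J = Qs J"
proof (induction rule: refl_group.induct)
  case id_in then show ?case by simp
next
  case (step a u)
  show ?case using step rr_Q[OF J step(1)] image_comp[of "root_refl a" u "Qs J"] by simp
qed

lemma OT_Q:
  assumes f: "OT f" "f ` R = R" "f ` A0 = A0" "f ` J = J"
  shows "f ` Qs J \<subseteq> Qs J"
proof
  fix x assume "x \<in> f ` Qs J"
  then obtain b where b: "b \<in> P" "b \<notin> span J" and x: "x = f b" by (auto simp: Qs_def)
  have l: "linear f" using f(1) orthogonal_transformation_linear by blast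
  have "x \<in> P" using OT_pos[OF f(1) _ _ b(1)] f(2,3) x by blast
  moreover have "x \<notin> span J"
  proof
    assume "x \<in> span J"
    hence "x \<in> f ` span J" using span_linear_image[OF l, of J] f(4) by simp
    hence "b \<in> span J" using x orthogonal_transformation_inj[OF f(1)] by (auto dest: injD)
    thus False using b by simp
  qed
  ultimately show "x \<in> Qs J" by (simp add: Qs_def)
qed

lemma sig_Q:
  assumes "\<sigma> ` J = J"
  shows "\<sigma> ` Qs J = Qs J"
proof
  show "\<sigma> ` Qs J \<subseteq> Qs J" using OT_Q[OF OT_sigma sigR sigA assms] .
  have "inv \<sigma> ` Qs J \<subseteq> Qs J"
    using OT_Q[OF orthogonal_transformation_inv[OF OT_sigma] inv_sig_im[OF sigR] inv_sig_im[OF sigA] inv_sig_im[OF assms]] .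
  show "Qs J \<subseteq> \<sigma> ` Qs J"
  proof
    fix x assume "x \<in> Qs J"
    hence "inv \<sigma> x \<in> Qs J" using \<open>inv \<sigma> ` Qs J \<subseteq> Qs J\<close> by blast
    hence "\<sigma> (inv \<sigma> x) \<in> \<sigma> ` Qs J" by blast
    thus "x \<in> \<sigma> ` Qs J" by simp
  qed
qed

end



context iwd begin

lemma AR_aff:
  assumes "\<beta> \<in> R" "\<alpha> \<in> R"
  shows "\<exists>N. of_int N = 2 * (\<beta> \<bullet> \<alpha>) / (\<beta> \<bullet> \<beta>) \<and> AR (aff_refl \<beta> m) \<alpha> (root_refl \<beta> \<alpha>) (m * N)"
proof -
  obtain N :: int where N: "2 * (\<beta> \<bullet> \<alpha>) / (\<beta> \<bullet> \<beta>) = of_int N" using realint[OF cartan[OF assms]] by blast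
  have "AR (aff_refl \<beta> m) \<alpha> (root_refl \<beta> \<alpha>) (m * N)"
    unfolding AR_def
  proof
    fix v
    have "\<alpha> \<bullet> aff_refl \<beta> m v = \<alpha> \<bullet> v - (\<beta> \<bullet> v - of_int m) * (2 * (\<beta> \<bullet> \<alpha>) / (\<beta> \<bullet> \<beta>))"
      unfolding aff_refl_def coroot_def by (simp add: inner_diff_right inner_commute)
    also have "\<dots> = root_refl \<beta> \<alpha> \<bullet> v + of_int (m * N)"
      unfolding root_refl_def N by (simp add: inner_diff_left algebra_simps inner_commute)
    finally show "\<alpha> \<bullet> aff_refl \<beta> m v = root_refl \<beta> \<alpha> \<bullet> v + of_int (m * N)" .
  qed
  thus ?thesis using N by metis
qed

lemma K_neg:
  assumes "AR f \<alpha> \<beta> c" "\<beta> \<in> R"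
  shows "alcove_k (- \<alpha>) (f ` A0) = 1 - alcove_k \<alpha> (f ` A0)"
  using K_formula[OF assms] K_formula[OF AR_neg[OF assms(1)] negR[OF assms(2)]] Kid_neg[OF assms(2)]
  by simp

lemma K_id: "\<alpha> \<in> R \<Longrightarrow> alcove_k \<alpha> A0 = Kid P \<alpha>"
  using K_formula[OF AR_id, of \<alpha>] by simp

lemma wall_other:
  assumes bR: "\<beta> \<in> R" and w: "is_wall R A0 \<beta> m" and aR: "\<alpha> \<in> R" and ne: "\<alpha> \<noteq> \<beta>" "\<alpha> \<noteq> - \<beta>"
  shows "alcove_k \<alpha> (aff_refl \<beta> m ` A0) = alcove_k \<alpha> A0"
proof -
  obtain p where p: "p \<in> closure A0" "\<beta> \<bullet> p = of_int m"
    and pu: "\<forall>b\<in>R. \<forall>mm::int. b \<bullet> p = of_int mm \<longrightarrow> (b = \<beta> \<and> mm = m) \<or> (b = - \<beta> \<and> mm = - m)"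
    using w unfolding is_wall_def by blast
  define x where "x = \<alpha> \<bullet> p"
  define j where "j = \<lceil>x\<rceil>"
  have xn: "x \<noteq> of_int mm" for mm using pu aR ne unfolding x_def by blast
  have j1: "of_int j - 1 < x" "x < of_int j"
  proof -
    show "of_int j - 1 < x" unfolding j_def by linarith
    have "x \<le> of_int j" unfolding j_def by linarith
    thus "x < of_int j" using xn[of j] by linarith
  qed
  define e where "e = min (x - (of_int j - 1)) (of_int j - x)"
  have e0: "e > 0" unfolding e_def using j1 by simp
  have na: "norm \<alpha> + 1 > 0" using norm_ge_zero[of \<alpha>] by linarith
  obtain q where q: "q \<in> A0" "dist q p < e / (norm \<alpha> + 1)"
    using p(1) e0 na unfolding closure_approachable by (meson divide_pos_pos)
  have nqp: "norm \<alpha> * norm (q - p) < e"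
  proof -
    have "norm \<alpha> * norm (q - p) \<le> norm \<alpha> * (e / (norm \<alpha> + 1))"
      using q(2) by (intro mult_left_mono) (auto simp: dist_norm)
    also have "\<dots> < e" using e0 na by (simp add: field_simps)
    finally show ?thesis .
  qed
  have d1: "\<bar>\<alpha> \<bullet> q - x\<bar> < e"
  proof -
    have "\<bar>\<alpha> \<bullet> q - x\<bar> = \<bar>\<alpha> \<bullet> (q - p)\<bar>" unfolding x_def by (simp add: inner_diff_right)
    also have "\<dots> \<le> norm \<alpha> * norm (q - p)" by (rule Cauchy_Schwarz_ineq2)
    finally show ?thesis using nqp by simp
  qed
  have sp: "aff_refl \<beta> m p = p" unfolding aff_refl_def using p(2) by simp
  have sq: "aff_refl \<beta> m q - p = root_refl \<beta> (q - p)"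
  proof -
    have "aff_refl \<beta> m q - p = aff_refl \<beta> m q - aff_refl \<beta> m p" using sp by simp
    also have "\<dots> = root_refl \<beta> q - root_refl \<beta> p" unfolding aff_rr by simp
    also have "\<dots> = root_refl \<beta> (q - p)" using linear_diff[OF rr_linear] by metis
    finally show ?thesis .
  qed
  have d2: "\<bar>\<alpha> \<bullet> aff_refl \<beta> m q - x\<bar> < e"
  proof -
    have "\<bar>\<alpha> \<bullet> aff_refl \<beta> m q - x\<bar> = \<bar>\<alpha> \<bullet> root_refl \<beta> (q - p)\<bar>"
      unfolding x_def sq[symmetric] by (simp add: inner_diff_right)
    also have "\<dots> \<le> norm \<alpha> * norm (root_refl \<beta> (q - p))" by (rule Cauchy_Schwarz_ineq2)
    also have "norm (root_refl \<beta> (q - p)) = norm (q - p)"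
      using orthogonal_transformation_norm[OF OT_rr[OF nzR[OF bR]]] by blast
    finally show ?thesis using nqp by simp
  qed
  have i1: "of_int j - 1 < \<alpha> \<bullet> q" "\<alpha> \<bullet> q < of_int j" using d1 unfolding e_def by linarith+
  have i2: "of_int j - 1 < \<alpha> \<bullet> aff_refl \<beta> m q" "\<alpha> \<bullet> aff_refl \<beta> m q < of_int j" using d2 unfolding e_def by linarith+
  obtain N where AS: "AR (aff_refl \<beta> m) \<alpha> (root_refl \<beta> \<alpha>) (m * N)" using AR_aff[OF bR aR] by blast
  have k1: "alcove_k \<alpha> (aff_refl \<beta> m ` A0) = j"
    using K_point2[OF AS rrR[OF bR aR] q(1)] i2 int_unique by blast
  have k2: "alcove_k \<alpha> (id ` A0) = j"
    using K_point2[OF AR_id aR q(1)] i1 int_unique by auto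
  show ?thesis using k1 k2 by simp
qed

lemma wall_self:
  assumes bR: "\<beta> \<in> R" and w: "is_wall R A0 \<beta> m"
  shows "alcove_k \<beta> (aff_refl \<beta> m ` A0) - alcove_k \<beta> A0 = 1 \<or> alcove_k \<beta> (aff_refl \<beta> m ` A0) - alcove_k \<beta> A0 = -1"
proof -
  obtain p where p: "p \<in> closure A0" "\<beta> \<bullet> p = of_int m"
    using w unfolding is_wall_def by blast
  obtain N where N: "of_int N = 2 * (\<beta> \<bullet> \<beta>) / (\<beta> \<bullet> \<beta>)" and AS: "AR (aff_refl \<beta> m) \<beta> (root_refl \<beta> \<beta>) (m * N)"
    using AR_aff[OF bR bR] by blast
  have N2: "N = 2" using N aa_pos[OF bR] by simp
  have rb: "root_refl \<beta> \<beta> = - \<beta>" using rr_neg_self nzR[OF bR] by blast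
  have Ks: "alcove_k \<beta> (aff_refl \<beta> m ` A0) = 2 * m + Kid P (- \<beta>)"
    using K_formula[OF AS rrR[OF bR bR]] N2 rb by simp
  have Ki: "alcove_k \<beta> A0 = Kid P \<beta>" using K_id[OF bR] .
  have cl: "b \<in> P \<Longrightarrow> closure A0 \<subseteq> {v. b \<bullet> v \<ge> -1} \<inter> {v. b \<bullet> v \<le> 0}" for b
    by (intro closure_minimal closed_Int closed_halfspace_le closed_halfspace_ge)
       (auto simp: base_alcove_def less_imp_le)
  show ?thesis
  proof (cases "\<beta> \<in> P")
    case True
    have "-1 \<le> \<beta> \<bullet> p" "\<beta> \<bullet> p \<le> 0" using cl[OF True] p(1) by auto
    hence "m = -1 \<or> m = 0" using p(2) by linarith
    moreover have "Kid P (- \<beta>) = 1" "Kid P \<beta> = 0" using True pos_not_neg unfolding Kid_def by auto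
    ultimately show ?thesis using Ks Ki by auto
  next
    case False
    have nb: "- \<beta> \<in> P" using pos_neg[OF bR False] .
    have "-1 \<le> - \<beta> \<bullet> p" "- \<beta> \<bullet> p \<le> 0" using cl[OF nb] p(1) by auto
    hence "m = 1 \<or> m = 0" using p(2) by simp linarith
    moreover have "Kid P (- \<beta>) = 0" "Kid P \<beta> = 1" using False nb unfolding Kid_def by auto
    ultimately show ?thesis using Ks Ki by auto
  qed
qed

end



lemma rr_coroot_neg: "a \<noteq> 0 \<Longrightarrow> root_refl a (c *\<^sub>R coroot a) = - (c *\<^sub>R coroot a)"
proof -
  assume a: "a \<noteq> 0"
  have "a \<bullet> coroot a = 2" unfolding coroot_def using a by simp
  hence "root_refl a (coroot a) = - coroot a" unfolding rr_coroot by (simp add: scaleR_2)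
  thus ?thesis using linear_scale[OF rr_linear, of a c "coroot a"] by simp
qed

lemma aff_invol: "a \<noteq> 0 \<Longrightarrow> aff_refl a k (aff_refl a k v) = v"
proof -
  assume a: "a \<noteq> 0"
  have "aff_refl a k (aff_refl a k v) = root_refl a (root_refl a v + real_of_int k *\<^sub>R coroot a) + real_of_int k *\<^sub>R coroot a"
    unfolding aff_rr ..
  also have "\<dots> = root_refl a (root_refl a v) + root_refl a (real_of_int k *\<^sub>R coroot a) + real_of_int k *\<^sub>R coroot a"
    using linear_add[OF rr_linear] by simp
  also have "\<dots> = v" using a by (simp add: rr_invol rr_coroot_neg)
  finally show ?thesis .
qed

lemma linpart_aff: "linpart (aff_refl a k) = root_refl a"
  unfolding linpart_def aff_rr by (rule ext) (simp add: rr_coroot)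

lemma ints_floor: "x \<in> \<int> \<Longrightarrow> real_of_int \<lfloor>x\<rfloor> = x"
  by (metis Ints_cases floor_of_int)

context iwd begin

lemma K_comp:
  assumes "AR f \<alpha> \<beta> c" "\<beta> \<in> R" "AR h \<beta> \<gamma> d" "\<gamma> \<in> R"
  shows "alcove_k \<alpha> ((f \<circ> h) ` A0) = c + alcove_k \<beta> (h ` A0)"
  using K_formula[OF AR_comp[OF assms(1,3)] assms(4)] K_formula[OF assms(3,4)] by simp

lemma length_img:
  assumes "f ` A0 = h ` A0" "\<And>\<alpha>. \<alpha> \<in> P \<Longrightarrow> \<exists>\<beta> c. \<beta> \<in> R \<and> AR h \<alpha> \<beta> c"
  shows "int (iw_length P f) = (\<Sum>\<alpha>\<in>P. \<bar>alcove_k \<alpha> (h ` A0)\<bar>)"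
proof -
  have "iw_length P f = iw_length P h" unfolding iw_length_def using assms(1) by simp
  thus ?thesis using length_formula[OF assms(2)] by simp
qed

definition rep :: "'v \<Rightarrow> 'v" where "rep x = (if x \<in> P then x else - x)"

lemma reindex_sum:
  fixes H :: "'v \<Rightarrow> int"
  assumes f: "OT f" "f ` R = R" and ev: "\<And>\<alpha>. \<alpha> \<in> R \<Longrightarrow> H (- \<alpha>) = H \<alpha>"
  shows "(\<Sum>\<alpha>\<in>P. H (f \<alpha>)) = (\<Sum>\<alpha>\<in>P. H \<alpha>)"
proof -
  have l: "linear f" using f(1) orthogonal_transformation_linear by blast
  have inj: "inj f" using f(1) orthogonal_transformation_inj by blast
  have fR: "\<alpha> \<in> P \<Longrightarrow> f \<alpha> \<in> R" for \<alpha> using f(2) PR by auto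
  have repP: "x \<in> R \<Longrightarrow> rep x \<in> P" for x unfolding rep_def using pos_neg by auto
  have Hrep: "x \<in> R \<Longrightarrow> H (rep x) = H x" for x unfolding rep_def using ev by auto
  have i: "inj_on (rep \<circ> f) P"
  proof (rule inj_onI)
    fix a b assume a: "a \<in> P" and b: "b \<in> P" and e: "(rep \<circ> f) a = (rep \<circ> f) b"
    have "f a = f b \<or> f a = - f b"
      using e unfolding rep_def o_def by (cases "f a \<in> P"; cases "f b \<in> P"; simp; metis minus_minus)
    moreover have "f (- b) = - f b" using linear_neg[OF l] by blast
    ultimately have "a = b \<or> a = - b" using inj by (metis injD)
    thus "a = b" using a b pos_not_neg by blast
  qed
  have im: "(rep \<circ> f) ` P = P"
    using endo_inj_surj[OF finP _ i] repP fR by auto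
  have "(\<Sum>\<alpha>\<in>P. H \<alpha>) = (\<Sum>\<alpha>\<in>(rep \<circ> f) ` P. H \<alpha>)" using im by simp
  also have "\<dots> = (\<Sum>\<alpha>\<in>P. H ((rep \<circ> f) \<alpha>))" using sum.reindex[OF i] by simp
  also have "\<dots> = (\<Sum>\<alpha>\<in>P. H (f \<alpha>))" using Hrep fR by (intro sum.cong) auto
  finally show ?thesis by simp
qed

end



context iwd begin

lemma rep_cases: "x \<in> R \<Longrightarrow> rep x = x \<or> rep x = - x" unfolding rep_def by auto
lemma rep_P: "x \<in> R \<Longrightarrow> rep x \<in> P" unfolding rep_def using pos_neg by auto

lemma len_jump:
  fixes g g' :: "'v \<Rightarrow> int"
  assumes bR: "\<beta> \<in> R" and cR: "\<gamma> \<in> R" and ne: "\<gamma> \<noteq> \<beta>" "\<gamma> \<noteq> - \<beta>"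
    and eps: "\<epsilon> = 1 \<or> \<epsilon> = -1"
    and gb: "g' \<beta> = g \<beta> - \<epsilon>" and gc: "g' \<gamma> = g \<gamma> + \<epsilon>"
    and oth: "\<And>\<alpha>. \<alpha> \<in> R \<Longrightarrow> \<alpha> \<noteq> \<beta> \<Longrightarrow> \<alpha> \<noteq> - \<beta> \<Longrightarrow> \<alpha> \<noteq> \<gamma> \<Longrightarrow> \<alpha> \<noteq> - \<gamma> \<Longrightarrow> g' \<alpha> = g \<alpha>"
    and go: "\<And>\<alpha>. \<alpha> \<in> R \<Longrightarrow> g (- \<alpha>) = - g \<alpha>" and g'o: "\<And>\<alpha>. \<alpha> \<in> R \<Longrightarrow> g' (- \<alpha>) = - g' \<alpha>"
    and sb: "\<epsilon> * g \<beta> \<le> 0" and sc: "\<epsilon> * g \<gamma> \<ge> 0"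
  shows "(\<Sum>\<alpha>\<in>P. \<bar>g' \<alpha>\<bar>) = (\<Sum>\<alpha>\<in>P. \<bar>g \<alpha>\<bar>) + 2"
proof -
  define h where "h \<alpha> = \<bar>g' \<alpha>\<bar> - \<bar>g \<alpha>\<bar>" for \<alpha>
  have hev: "\<alpha> \<in> R \<Longrightarrow> h (rep \<alpha>) = h \<alpha>" for \<alpha>
    using rep_cases[of \<alpha>] go g'o unfolding h_def by (auto simp del: abs_minus_cancel)
  have hb: "h \<beta> = 1" unfolding h_def using gb eps sb by (cases "\<epsilon> = 1") auto
  have hc: "h \<gamma> = 1" unfolding h_def using gc eps sc by (cases "\<epsilon> = 1") auto
  define pb where "pb = rep \<beta>"
  define pc where "pc = rep \<gamma>"
  have pbP: "pb \<in> P" and pcP: "pc \<in> P" unfolding pb_def pc_def using rep_P bR cR by auto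
  have pne: "pb \<noteq> pc"
  proof
    assume "pb = pc"
    hence "\<beta> = \<gamma> \<or> \<beta> = - \<gamma>" unfolding pb_def pc_def using rep_cases[OF bR] rep_cases[OF cR]
      by (metis minus_minus)
    thus False using ne by auto
  qed
  have h0: "\<alpha> \<in> P - {pb, pc} \<Longrightarrow> h \<alpha> = 0" for \<alpha>
  proof -
    assume a: "\<alpha> \<in> P - {pb, pc}"
    have aR: "\<alpha> \<in> R" using a PR by auto
    have "\<alpha> \<noteq> \<beta> \<and> \<alpha> \<noteq> - \<beta> \<and> \<alpha> \<noteq> \<gamma> \<and> \<alpha> \<noteq> - \<gamma>"
      using a pos_not_neg unfolding pb_def pc_def rep_def by (auto split: if_splits)
    thus "h \<alpha> = 0" using oth[OF aR] unfolding h_def by auto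
  qed
  have "(\<Sum>\<alpha>\<in>P. h \<alpha>) = (\<Sum>\<alpha>\<in>{pb, pc}. h \<alpha>)"
    using finP pbP pcP h0 by (intro sum.mono_neutral_right) auto
  also have "\<dots> = h pb + h pc" using pne by simp
  also have "\<dots> = 2" unfolding pb_def pc_def using hev[OF bR] hev[OF cR] hb hc by simp
  finally have "(\<Sum>\<alpha>\<in>P. h \<alpha>) = 2" .
  moreover have "(\<Sum>\<alpha>\<in>P. \<bar>g' \<alpha>\<bar>) = (\<Sum>\<alpha>\<in>P. \<bar>g \<alpha>\<bar>) + (\<Sum>\<alpha>\<in>P. h \<alpha>)"
    unfolding h_def by (simp add: sum.distrib[symmetric])
  ultimately show ?thesis by simp
qed

end



context iwd begin

lemma core:
  fixes g g' d :: "'v \<Rightarrow> int" and star :: "'v \<Rightarrow> 'v"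
  assumes starR: "\<And>\<alpha>. \<alpha> \<in> R \<Longrightarrow> star \<alpha> \<in> R"
    and star_neg: "\<And>\<alpha>. \<alpha> \<in> R \<Longrightarrow> star (- \<alpha>) = - star \<alpha>"
    and bR: "\<beta> \<in> R" and cR: "\<gamma> \<in> R" and sc: "star \<gamma> = \<beta>"
    and sinj: "\<And>\<alpha>. \<alpha> \<in> R \<Longrightarrow> star \<alpha> = \<beta> \<Longrightarrow> \<alpha> = \<gamma>"
    and d0: "\<And>\<rho>. \<rho> \<in> R \<Longrightarrow> \<rho> \<noteq> \<beta> \<Longrightarrow> \<rho> \<noteq> - \<beta> \<Longrightarrow> d \<rho> = 0"
    and db: "d \<beta> = \<epsilon>" and eps: "\<epsilon> = 1 \<or> \<epsilon> = -1" and dnb: "d (- \<beta>) = - \<epsilon>"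
    and gg: "\<And>\<alpha>. \<alpha> \<in> R \<Longrightarrow> g' \<alpha> = g \<alpha> + d (star \<alpha>) - d \<alpha>"
    and go: "\<And>\<alpha>. \<alpha> \<in> R \<Longrightarrow> g (- \<alpha>) = - g \<alpha>" and g'o: "\<And>\<alpha>. \<alpha> \<in> R \<Longrightarrow> g' (- \<alpha>) = - g' \<alpha>"
    and PhR: "Phi \<subseteq> R" and Ph1: "\<And>\<alpha>. \<alpha> \<in> Phi \<Longrightarrow> - \<alpha> \<notin> Phi"
    and Ph2: "\<And>\<alpha>. \<alpha> \<in> R \<Longrightarrow> \<alpha> \<in> Phi \<longleftrightarrow> star \<alpha> \<in> Phi"
    and gpos: "\<And>\<alpha>. \<alpha> \<in> Phi \<Longrightarrow> g \<alpha> \<ge> 0"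
    and len: "(\<Sum>\<alpha>\<in>P. \<bar>g' \<alpha>\<bar>) = (\<Sum>\<alpha>\<in>P. \<bar>g \<alpha>\<bar>)"
    and a0: "\<alpha>0 \<in> Phi"
  shows "g' \<alpha>0 \<ge> 0"
proof (rule ccontr)
  assume neg: "\<not> g' \<alpha>0 \<ge> 0"
  have a0R: "\<alpha>0 \<in> R" using a0 PhR by auto
  have nn: "x \<noteq> 0 \<Longrightarrow> x \<noteq> - x" for x :: 'v
  proof
    assume "x \<noteq> 0" "x = - x"
    hence "(2::real) *\<^sub>R x = 0" by (metis scaleR_2 add.inverse_inverse neg_eq_iff_add_eq_0)
    thus False using \<open>x \<noteq> 0\<close> by simp
  qed
  have nb: "\<beta> \<noteq> - \<beta>" using nn nzR[OF bR] by blast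
  have nc: "\<gamma> \<noteq> - \<gamma>" using nn nzR[OF cR] by blast
  have snc: "star (- \<gamma>) = - \<beta>" using star_neg[OF cR] sc by simp
  have sinj2: "\<alpha> \<in> R \<Longrightarrow> star \<alpha> = - \<beta> \<Longrightarrow> \<alpha> = - \<gamma>" for \<alpha>
  proof -
    assume "\<alpha> \<in> R" "star \<alpha> = - \<beta>"
    hence "star (- \<alpha>) = \<beta>" using star_neg by simp
    hence "- \<alpha> = \<gamma>" using sinj negR \<open>\<alpha> \<in> R\<close> by blast
    thus ?thesis by auto
  qed
  have dstar: "\<alpha> \<in> R \<Longrightarrow> d (star \<alpha>) = (if \<alpha> = \<gamma> then \<epsilon> else if \<alpha> = - \<gamma> then - \<epsilon> else 0)" for \<alpha>
  proof -
    assume aR: "\<alpha> \<in> R"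
    show ?thesis
    proof (cases "\<alpha> = \<gamma>")
      case True thus ?thesis using sc db by simp
    next
      case False
      show ?thesis
      proof (cases "\<alpha> = - \<gamma>")
        case True thus ?thesis using snc dnb False by simp
      next
        case F2: False
        have "star \<alpha> \<noteq> \<beta>" "star \<alpha> \<noteq> - \<beta>" using sinj sinj2 aR False F2 by blast+
        thus ?thesis using d0 starR aR False F2 by simp
      qed
    qed
  qed
  have dd: "\<alpha> \<in> R \<Longrightarrow> d \<alpha> = (if \<alpha> = \<beta> then \<epsilon> else if \<alpha> = - \<beta> then - \<epsilon> else 0)" for \<alpha>
    using db dnb d0 by auto
  have g0: "g \<alpha>0 \<ge> 0" using gpos a0 .
  show False
  proof (cases "\<gamma> = \<beta>")
    case True
    hence "g' \<alpha>0 = g \<alpha>0" using gg[OF a0R] dstar[OF a0R] dd[OF a0R] by simp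
    thus False using neg g0 by simp
  next
    case F1: False
    show False
    proof (cases "\<gamma> = - \<beta>")
      case True
      show False
      proof (cases "\<alpha>0 = \<beta> \<or> \<alpha>0 = - \<beta>")
        case False
        hence "g' \<alpha>0 = g \<alpha>0" using gg[OF a0R] dstar[OF a0R] dd[OF a0R] True by auto
        thus False using neg g0 by simp
      next
        case b: True
        thus False
        proof
          assume e: "\<alpha>0 = \<beta>"
          have "star \<beta> = - \<beta>" using star_neg[OF cR] sc True by (metis minus_minus)
          hence "- \<beta> \<in> Phi" using Ph2[OF bR] a0 e by simp
          thus False using Ph1 a0 e by blast
        next
          assume e: "\<alpha>0 = - \<beta>"
          have "star (- \<beta>) = \<beta>" using sc True by simp
          hence "\<beta> \<in> Phi" using Ph2[OF negR[OF bR]] a0 e by simp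
          thus False using Ph1 a0 e by blast
        qed
      qed
    next
      case F2: False
      have gb: "g' \<beta> = g \<beta> - \<epsilon>" using gg[OF bR] dstar[OF bR] dd[OF bR] F1 F2 by auto
      have gc: "g' \<gamma> = g \<gamma> + \<epsilon>" using gg[OF cR] dstar[OF cR] dd[OF cR] F1 F2 by auto
      have oth: "g' \<alpha> = g \<alpha>" if "\<alpha> \<in> R" "\<alpha> \<noteq> \<beta>" "\<alpha> \<noteq> - \<beta>" "\<alpha> \<noteq> \<gamma>" "\<alpha> \<noteq> - \<gamma>" for \<alpha>
        using gg[OF that(1)] dstar[OF that(1)] dd[OF that(1)] that by auto
      have signs: "\<epsilon> * g \<beta> \<le> 0 \<and> \<epsilon> * g \<gamma> \<ge> 0"
      proof -
        have D: "g' \<alpha>0 = g \<alpha>0 + d (star \<alpha>0) - d \<alpha>0" using gg[OF a0R] .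
        consider "\<alpha>0 = \<beta>" | "\<alpha>0 = - \<beta>" | "\<alpha>0 = \<gamma>" | "\<alpha>0 = - \<gamma>"
          | "\<alpha>0 \<noteq> \<beta> \<and> \<alpha>0 \<noteq> - \<beta> \<and> \<alpha>0 \<noteq> \<gamma> \<and> \<alpha>0 \<noteq> - \<gamma>" by blast
        thus ?thesis
        proof cases
          case 1
          hence "\<epsilon> = 1" "g \<beta> = 0" using gb neg g0 eps by auto
          moreover have "\<gamma> \<in> Phi" using Ph2[OF cR] sc a0 1 by simp
          ultimately show ?thesis using gpos by simp
        next
          case 2
          have "g' (- \<beta>) = g (- \<beta>) + \<epsilon>" using gg[OF negR[OF bR]] dstar[OF negR[OF bR]] dd[OF negR[OF bR]] F1 F2 nb
            by (auto simp: minus_equation_iff)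
          hence e: "\<epsilon> = -1" "g (- \<beta>) = 0" using 2 neg g0 eps by auto
          moreover have "- \<gamma> \<in> Phi" using Ph2[OF negR[OF cR]] snc a0 2 by simp
          ultimately show ?thesis using gpos[of "- \<gamma>"] go[OF cR] go[OF bR] by simp
        next
          case 3
          hence "\<epsilon> = -1" "g \<gamma> = 0" using gc neg g0 eps by auto
          moreover have "\<beta> \<in> Phi" using Ph2[OF cR] sc a0 3 by simp
          ultimately show ?thesis using gpos by simp
        next
          case 4
          have "g' (- \<gamma>) = g (- \<gamma>) - \<epsilon>" using gg[OF negR[OF cR]] dstar[OF negR[OF cR]] dd[OF negR[OF cR]] F1 F2 nc
            by (auto simp: minus_equation_iff)
          hence e: "\<epsilon> = 1" "g (- \<gamma>) = 0" using 4 neg g0 eps by auto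
          moreover have "- \<beta> \<in> Phi" using Ph2[OF negR[OF cR]] snc a0 4 by simp
          ultimately show ?thesis using gpos[of "- \<beta>"] go[OF cR] go[OF bR] by simp
        next
          case 5
          hence "g' \<alpha>0 = g \<alpha>0" using oth a0R by blast
          thus ?thesis using neg g0 by simp
        qed
      qed
      have "(\<Sum>\<alpha>\<in>P. \<bar>g' \<alpha>\<bar>) = (\<Sum>\<alpha>\<in>P. \<bar>g \<alpha>\<bar>) + 2"
        using len_jump[OF bR cR F1 F2 eps gb gc oth go g'o] signs by blast
      thus False using len by simp
    qed
  qed
qed

end



theorem lemma4p4p3:
  fixes R P L J :: "'v::euclidean_space set"
    and \<sigma> y s w :: "'v \<Rightarrow> 'v"
  assumes "iw_datum R P L \<sigma>"
    and "y \<in> iw_group R L"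
    and "s \<in> simple_aff_refls R P"
    and "iw_length P (s \<circ> y \<circ> frob \<sigma> s) = iw_length P y"
    and "J \<subseteq> simple_roots P"
    and "\<sigma> ` J = J"
    and "w \<in> refl_group R"
    and "JWD_alcove R P L \<sigma> J w y"
  shows "JWD_alcove R P L \<sigma> J (linpart s \<circ> w) (s \<circ> y \<circ> frob \<sigma> s)"
proof -
  interpret iwd R P L \<sigma> using assms(1) by (simp add: iwd_def)
  obtain t u where yd: "y = (\<lambda>v. t + u v)" and tL: "t \<in> L" and uG: "u \<in> refl_group R"
    using assms(2) unfolding iw_sub_def by blast
  obtain \<beta> m where sd: "s = aff_refl \<beta> m" and bR: "\<beta> \<in> R" and wall: "is_wall R A0 \<beta> m"
    using assms(3) unfolding simple_aff_refls_def by blast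
  have JR: "J \<subseteq> R" using assms(5) PR unfolding simple_roots_def by auto
  obtain t' u' where c1: "inv w \<circ> y \<circ> frob \<sigma> w = (\<lambda>v. t' + u' v)" and t'L: "t' \<in> L"
    and u'G: "u' \<in> refl_group J"
    using assms(8) unfolding JWD_alcove_def iw_sub_def by blast
  have Qeq: "P - (roots_J R J \<inter> P) = Qs J" unfolding roots_J_def Qs_def using PR by auto
  have c2: "\<forall>\<alpha>\<in>w ` Qs J. alcove_k \<alpha> (y ` A0) \<ge> alcove_k \<alpha> A0"
    using assms(8) Qeq unfolding JWD_alcove_def by simp
  have uP: "OT u" "u ` R = R" "u ` L = L" using rg_props[OF uG] by auto
  have wP: "OT w" "w ` R = R" "w ` L = L" using rg_props[OF assms(7)] by auto
  have u'P: "OT u'" using rg_props[OF u'G JR] by auto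
  have lu: "linear u" and lw: "linear w" and lu': "linear u'" and ls: "linear \<sigma>"
    using uP wP u'P OT_sigma orthogonal_transformation_linear by blast+
  have bw: "bij w" using wP orthogonal_transformation_bij by blast
  have winv[simp]: "w (inv w z) = z" for z using bw by (simp add: bij_is_surj surj_f_inv_f)
  have invw[simp]: "inv w (w z) = z" for z using bw by (simp add: bij_is_inj)
  have is0: "inv \<sigma> 0 = 0" using inv_sig_apply[of 0] linear_0[OF ls] by simp
  have key: "u (\<sigma> (w x)) = w (u' (\<sigma> x))" for x
  proof -
    have e: "inv w (t + u (\<sigma> (w (inv \<sigma> v)))) = t' + u' v" for v
      using fun_cong[OF c1, of v] unfolding yd frob_def by simp
    have e2: "t + u (\<sigma> (w (inv \<sigma> v))) = w t' + w (u' v)" for v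
      using arg_cong[OF e[of v], of w] linear_add[OF lw] by simp
    have "t = w t'" using e2[of 0] is0 linear_0[OF lw] linear_0[OF ls] linear_0[OF lu] linear_0[OF lu'] by simp
    thus ?thesis using e2[of "\<sigma> x"] by simp
  qed
  define \<psi> where "\<psi> = u \<circ> \<sigma>"
  have OTpsi: "OT \<psi>" unfolding \<psi>_def using uP(1) OT_sigma orthogonal_transformation_compose by blast
  have psiR: "\<psi> ` R = R" unfolding \<psi>_def using uP(2) sigR image_comp[of u \<sigma> R] by simp
  have bpsi: "bij \<psi>" using OTpsi orthogonal_transformation_bij by blast
  define star where "star = inv \<psi>"
  have ps1[simp]: "\<psi> (star x) = x" for x unfolding star_def using bpsi by (simp add: bij_is_surj surj_f_inv_f)
  have ps2[simp]: "star (\<psi> x) = x" for x unfolding star_def using bpsi by (simp add: bij_is_inj)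
  have OTstar: "OT star" unfolding star_def using orthogonal_transformation_inv[OF OTpsi] .
  have starR: "\<alpha> \<in> R \<Longrightarrow> star \<alpha> \<in> R" for \<alpha>
  proof -
    assume "\<alpha> \<in> R"
    then obtain x where "x \<in> R" "\<alpha> = \<psi> x" using psiR by blast
    thus ?thesis by simp
  qed
  have star_neg: "star (- \<alpha>) = - star \<alpha>" for \<alpha>
    using linear_neg[OF orthogonal_transformation_linear[OF OTstar]] by blast
  define \<gamma> where "\<gamma> = \<psi> \<beta>"
  have cR: "\<gamma> \<in> R" unfolding \<gamma>_def using psiR bR by blast
  have sc: "star \<gamma> = \<beta>" unfolding \<gamma>_def by simp
  have sinj: "star \<alpha> = \<beta> \<Longrightarrow> \<alpha> = \<gamma>" for \<alpha> unfolding \<gamma>_def by (metis ps1)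
  define Phi where "Phi = w ` Qs J"
  have QP: "Qs J \<subseteq> P" unfolding Qs_def by auto
  have PhR: "Phi \<subseteq> R" unfolding Phi_def using QP PR wP(2) by auto
  have Ph1: "\<alpha> \<in> Phi \<Longrightarrow> - \<alpha> \<notin> Phi" for \<alpha>
  proof
    assume a: "\<alpha> \<in> Phi" "- \<alpha> \<in> Phi"
    then obtain b b' where b: "b \<in> Qs J" "\<alpha> = w b" "b' \<in> Qs J" "- \<alpha> = w b'" unfolding Phi_def by blast
    have "w (- b) = w b'" using b linear_neg[OF lw] by simp
    hence "- b = b'" using bw bij_is_inj injD by metis
    thus False using b QP pos_not_neg by blast
  qed
  have psiPhi: "\<psi> ` Phi = Phi"
  proof -
    have "\<psi> \<circ> w = w \<circ> (u' \<circ> \<sigma>)" unfolding \<psi>_def using key by (simp add: fun_eq_iff)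
    hence "\<psi> ` Phi = w ` (u' ` (\<sigma> ` Qs J))" unfolding Phi_def by (metis image_comp)
    also have "\<dots> = Phi" unfolding Phi_def using sig_Q[OF assms(6)] rgJ_Q[OF assms(5) u'G] by simp
    finally show ?thesis .
  qed
  have Ph2: "\<alpha> \<in> R \<Longrightarrow> \<alpha> \<in> Phi \<longleftrightarrow> star \<alpha> \<in> Phi" for \<alpha>
  proof
    assume "\<alpha> \<in> Phi"
    then obtain x where "x \<in> Phi" "\<alpha> = \<psi> x" using psiPhi by blast
    thus "star \<alpha> \<in> Phi" by simp
  next
    assume "star \<alpha> \<in> Phi"
    hence "\<psi> (star \<alpha>) \<in> Phi" using psiPhi by blast
    thus "\<alpha> \<in> Phi" by simp
  qed
  define c where "c \<alpha> = \<lfloor>\<alpha> \<bullet> t\<rfloor>" for \<alpha>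
  have cI: "\<alpha> \<in> R \<Longrightarrow> real_of_int (c \<alpha>) = \<alpha> \<bullet> t" for \<alpha>
    unfolding c_def using ints_floor Lint[OF tL] by blast
  have cneg: "\<alpha> \<in> R \<Longrightarrow> c (- \<alpha>) = - c \<alpha>" for \<alpha>
  proof -
    assume aR: "\<alpha> \<in> R"
    have "real_of_int (c (- \<alpha>)) = real_of_int (- c \<alpha>)" using cI[OF aR] cI[OF negR[OF aR]] by simp
    thus ?thesis by (simp only: of_int_eq_iff)
  qed
  define \<phi> where "\<phi> = y \<circ> \<sigma>"
  have ARphi: "\<alpha> \<in> R \<Longrightarrow> AR \<phi> \<alpha> (star \<alpha>) (c \<alpha>)" for \<alpha>
  proof -
    assume aR: "\<alpha> \<in> R"
    show ?thesis unfolding AR_def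
    proof
      fix v
      have "\<alpha> \<bullet> \<phi> v = \<alpha> \<bullet> t + \<alpha> \<bullet> \<psi> v" unfolding \<phi>_def yd \<psi>_def by (simp add: inner_add_right)
      also have "\<alpha> \<bullet> \<psi> v = \<psi> (star \<alpha>) \<bullet> \<psi> v" by simp
      also have "\<psi> (star \<alpha>) \<bullet> \<psi> v = star \<alpha> \<bullet> v" using OTpsi unfolding orthogonal_transformation_def by blast
      finally show "\<alpha> \<bullet> \<phi> v = star \<alpha> \<bullet> v + real_of_int (c \<alpha>)" using cI[OF aR] by simp
    qed
  qed
  have bn: "\<beta> \<noteq> 0" using nzR[OF bR] .
  have ARs: "\<alpha> \<in> R \<Longrightarrow> \<exists>N. AR s \<alpha> (root_refl \<beta> \<alpha>) (m * N)" for \<alpha>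
    using AR_aff[OF bR] sd by blast
  have rbR: "\<alpha> \<in> R \<Longrightarrow> root_refl \<beta> \<alpha> \<in> R" for \<alpha> using rrR[OF bR] .
  define Ks where "Ks \<rho> = alcove_k \<rho> (s ` A0)" for \<rho>
  have Ks_neg: "\<rho> \<in> R \<Longrightarrow> Ks (- \<rho>) = 1 - Ks \<rho>" for \<rho>
  proof -
    assume "\<rho> \<in> R"
    then obtain N where "AR s \<rho> (root_refl \<beta> \<rho>) (m * N)" using ARs by blast
    thus ?thesis unfolding Ks_def using K_neg rbR \<open>\<rho> \<in> R\<close> by blast
  qed
  define g where "g \<alpha> = c \<alpha> + Kid P (star \<alpha>) - Kid P \<alpha>" for \<alpha>
  define g' where "g' \<alpha> = c \<alpha> + Ks (star \<alpha>) - Ks \<alpha>" for \<alpha>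
  define d where "d \<rho> = Ks \<rho> - Kid P \<rho>" for \<rho>
  define \<epsilon> where "\<epsilon> = d \<beta>"
  have gg: "\<alpha> \<in> R \<Longrightarrow> g' \<alpha> = g \<alpha> + d (star \<alpha>) - d \<alpha>" for \<alpha> unfolding g_def g'_def d_def by simp
  have d0: "\<rho> \<in> R \<Longrightarrow> \<rho> \<noteq> \<beta> \<Longrightarrow> \<rho> \<noteq> - \<beta> \<Longrightarrow> d \<rho> = 0" for \<rho>
    unfolding d_def Ks_def sd using wall_other[OF bR wall] K_id by simp
  have eps: "\<epsilon> = 1 \<or> \<epsilon> = -1" unfolding \<epsilon>_def d_def Ks_def sd using wall_self[OF bR wall] K_id[OF bR] by simp
  have dnb: "d (- \<beta>) = - \<epsilon>" unfolding \<epsilon>_def d_def using Ks_neg[OF bR] Kid_neg[OF bR] by simp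
  have go: "\<alpha> \<in> R \<Longrightarrow> g (- \<alpha>) = - g \<alpha>" for \<alpha>
    unfolding g_def using cneg star_neg Kid_neg starR by simp
  have g'o: "\<alpha> \<in> R \<Longrightarrow> g' (- \<alpha>) = - g' \<alpha>" for \<alpha>
    unfolding g'_def using cneg star_neg Ks_neg starR by simp
  have yA: "y ` A0 = \<phi> ` A0" unfolding \<phi>_def using sigA image_comp[of y \<sigma> A0] by simp
  have Ky: "\<alpha> \<in> R \<Longrightarrow> alcove_k \<alpha> (y ` A0) = c \<alpha> + Kid P (star \<alpha>)" for \<alpha>
    unfolding yA using K_formula[OF ARphi starR] by blast
  have gpos: "\<alpha> \<in> Phi \<Longrightarrow> g \<alpha> \<ge> 0" for \<alpha>
  proof -
    assume a: "\<alpha> \<in> Phi"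
    have aR: "\<alpha> \<in> R" using a PhR by auto
    have "alcove_k \<alpha> (y ` A0) \<ge> alcove_k \<alpha> A0" using c2 a unfolding Phi_def by blast
    thus ?thesis unfolding g_def using Ky[OF aR] K_id[OF aR] by simp
  qed
  define h where "h = s \<circ> (\<phi> \<circ> s)"
  have ss: "s \<circ> s = id" unfolding sd using aff_invol[OF bn] by (simp add: fun_eq_iff)
  have hK: "\<alpha> \<in> R \<Longrightarrow> alcove_k \<alpha> (h ` A0) - alcove_k \<alpha> A0 = g' (root_refl \<beta> \<alpha>)" for \<alpha>
  proof -
    assume aR: "\<alpha> \<in> R"
    define \<alpha>1 where "\<alpha>1 = root_refl \<beta> \<alpha>"
    have a1R: "\<alpha>1 \<in> R" unfolding \<alpha>1_def using rbR aR .
    obtain N where N: "AR s \<alpha> \<alpha>1 (m * N)" using ARs[OF aR] unfolding \<alpha>1_def by blast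
    obtain N1 where N1: "AR s (star \<alpha>1) (root_refl \<beta> (star \<alpha>1)) (m * N1)" using ARs[OF starR[OF a1R]] by blast
    obtain N2 where N2: "AR s \<alpha>1 (root_refl \<beta> \<alpha>1) (m * N2)" using ARs[OF a1R] by blast
    have A1: "AR (\<phi> \<circ> s) \<alpha>1 (root_refl \<beta> (star \<alpha>1)) (c \<alpha>1 + m * N1)"
      using AR_comp[OF ARphi[OF a1R] N1] .
    have "alcove_k \<alpha> (h ` A0) = m * N + alcove_k \<alpha>1 ((\<phi> \<circ> s) ` A0)"
      unfolding h_def using K_comp[OF N a1R A1 rbR[OF starR[OF a1R]]] .
    also have "alcove_k \<alpha>1 ((\<phi> \<circ> s) ` A0) = c \<alpha>1 + Ks (star \<alpha>1)"
      unfolding Ks_def using K_comp[OF ARphi[OF a1R] starR[OF a1R] N1 rbR[OF starR[OF a1R]]] .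
    finally have e1: "alcove_k \<alpha> (h ` A0) = m * N + (c \<alpha>1 + Ks (star \<alpha>1))" .
    have "alcove_k \<alpha> A0 = alcove_k \<alpha> ((s \<circ> s) ` A0)" using ss by simp
    also have "\<dots> = m * N + Ks \<alpha>1" unfolding Ks_def using K_comp[OF N a1R N2 rbR[OF a1R]] .
    finally show ?thesis using e1 unfolding g'_def \<alpha>1_def by simp
  qed
  have XA: "(s \<circ> y \<circ> frob \<sigma> s) ` A0 = h ` A0"
  proof -
    have "(s \<circ> y \<circ> frob \<sigma> s) ` A0 = s ` y ` \<sigma> ` s ` (inv \<sigma> ` A0)"
      unfolding frob_def by (simp add: image_comp)
    also have "\<dots> = h ` A0" unfolding h_def \<phi>_def using inv_sig_im[OF sigA] by (simp add: image_comp)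
    finally show ?thesis .
  qed
  have ARh: "\<alpha> \<in> P \<Longrightarrow> \<exists>\<beta>' c'. \<beta>' \<in> R \<and> AR h \<alpha> \<beta>' c'" for \<alpha>
  proof -
    assume "\<alpha> \<in> P"
    hence aR: "\<alpha> \<in> R" using PR by auto
    define \<alpha>1 where "\<alpha>1 = root_refl \<beta> \<alpha>"
    have a1R: "\<alpha>1 \<in> R" unfolding \<alpha>1_def using rbR aR .
    obtain N where N: "AR s \<alpha> \<alpha>1 (m * N)" using ARs[OF aR] unfolding \<alpha>1_def by blast
    obtain N1 where N1: "AR s (star \<alpha>1) (root_refl \<beta> (star \<alpha>1)) (m * N1)" using ARs[OF starR[OF a1R]] by blast
    have "AR h \<alpha> (root_refl \<beta> (star \<alpha>1)) (m * N + (c \<alpha>1 + m * N1))"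
      unfolding h_def using AR_comp[OF N AR_comp[OF ARphi[OF a1R] N1]] .
    thus ?thesis using rbR[OF starR[OF a1R]] by blast
  qed
  have ARphi2: "\<alpha> \<in> P \<Longrightarrow> \<exists>\<beta>' c'. \<beta>' \<in> R \<and> AR \<phi> \<alpha> \<beta>' c'" for \<alpha>
    using ARphi starR PR by blast
  have lenX: "int (iw_length P (s \<circ> y \<circ> frob \<sigma> s)) = (\<Sum>\<alpha>\<in>P. \<bar>g' \<alpha>\<bar>)"
  proof -
    have "int (iw_length P (s \<circ> y \<circ> frob \<sigma> s)) = (\<Sum>\<alpha>\<in>P. \<bar>alcove_k \<alpha> (h ` A0)\<bar>)"
      using length_img[OF XA ARh] .
    also have "\<dots> = (\<Sum>\<alpha>\<in>P. \<bar>g' (root_refl \<beta> \<alpha>)\<bar>)"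
    proof (rule sum.cong[OF refl])
      fix \<alpha> assume a: "\<alpha> \<in> P"
      hence aR: "\<alpha> \<in> R" using PR by auto
      have "alcove_k \<alpha> A0 = 0" using K_id[OF aR] a unfolding Kid_def by simp
      thus "\<bar>alcove_k \<alpha> (h ` A0)\<bar> = \<bar>g' (root_refl \<beta> \<alpha>)\<bar>" using hK[OF aR] by simp
    qed
    also have "\<dots> = (\<Sum>\<alpha>\<in>P. \<bar>g' \<alpha>\<bar>)"
      using reindex_sum[OF OT_rr[OF bn] rr_imR[OF bR], of "\<lambda>x. \<bar>g' x\<bar>"] g'o by simp
    finally show ?thesis .
  qed
  have leny: "int (iw_length P y) = (\<Sum>\<alpha>\<in>P. \<bar>g \<alpha>\<bar>)"
  proof -
    have "int (iw_length P y) = (\<Sum>\<alpha>\<in>P. \<bar>alcove_k \<alpha> (\<phi> ` A0)\<bar>)"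
      using length_img[OF yA ARphi2] .
    also have "\<dots> = (\<Sum>\<alpha>\<in>P. \<bar>g \<alpha>\<bar>)"
    proof (rule sum.cong[OF refl])
      fix \<alpha> assume a: "\<alpha> \<in> P"
      hence aR: "\<alpha> \<in> R" using PR by auto
      show "\<bar>alcove_k \<alpha> (\<phi> ` A0)\<bar> = \<bar>g \<alpha>\<bar>" using Ky[OF aR] a yA unfolding g_def Kid_def by simp
    qed
    finally show ?thesis .
  qed
  have len: "(\<Sum>\<alpha>\<in>P. \<bar>g' \<alpha>\<bar>) = (\<Sum>\<alpha>\<in>P. \<bar>g \<alpha>\<bar>)" using lenX leny assms(4) by simp
  have main: "\<alpha>0 \<in> Phi \<Longrightarrow> g' \<alpha>0 \<ge> 0" for \<alpha>0
    using core[OF starR star_neg bR cR sc sinj d0 _ eps dnb gg go g'o PhR Ph1 Ph2 gpos len] \<epsilon>_def by blast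
  have lps: "linpart s = root_refl \<beta>" unfolding sd by (rule linpart_aff)
  define r where "r = root_refl \<beta>"
  have OTr: "OT r" unfolding r_def using OT_rr[OF bn] .
  have lr: "linear r" using OTr orthogonal_transformation_linear by blast
  have rr[simp]: "r (r x) = x" for x unfolding r_def using rr_invol[OF bn] .
  have part2: "\<forall>\<alpha>\<in>(linpart s \<circ> w) ` (P - (roots_J R J \<inter> P)).
      alcove_k \<alpha> ((s \<circ> y \<circ> frob \<sigma> s) ` A0) \<ge> alcove_k \<alpha> A0"
  proof
    fix \<alpha> assume "\<alpha> \<in> (linpart s \<circ> w) ` (P - (roots_J R J \<inter> P))"
    then obtain b where b: "b \<in> Qs J" and a: "\<alpha> = r (w b)" unfolding Qeq lps r_def by auto
    have a0: "w b \<in> Phi" unfolding Phi_def using b by blast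
    have a0R: "w b \<in> R" using a0 PhR by auto
    have aR: "\<alpha> \<in> R" unfolding a r_def using rbR[OF a0R] .
    have "alcove_k \<alpha> (h ` A0) - alcove_k \<alpha> A0 = g' (w b)" using hK[OF aR] unfolding a r_def[symmetric] by simp
    thus "alcove_k \<alpha> ((s \<circ> y \<circ> frob \<sigma> s) ` A0) \<ge> alcove_k \<alpha> A0" using main[OF a0] XA by simp
  qed
  define lam where "lam = of_int m *\<^sub>R coroot \<beta>"
  have sr: "s x = r x + lam" for x unfolding sd lam_def r_def by (rule aff_rr)
  have lamL: "lam \<in> L" unfolding lam_def using Lmult[OF coroot_L[OF bR]] .
  define T where "T = inv w (t + u (\<sigma> lam) + r lam)"
  have TL: "T \<in> L"
  proof -
    have "u (\<sigma> lam) \<in> L" using uP(3) sigL lamL by blast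
    moreover have "r lam \<in> L" unfolding r_def using rr_L[OF bR lamL] .
    ultimately have "t + u (\<sigma> lam) + r lam \<in> L" using Ladd tL by blast
    moreover have "inv w ` L = L" using image_inv_f_f[OF bij_is_inj[OF bw], of L] wP(3) by simp
    ultimately show ?thesis unfolding T_def by blast
  qed
  define W where "W = r \<circ> w"
  have bW: "bij W" unfolding W_def using OTr wP(1) orthogonal_transformation_compose orthogonal_transformation_bij by blast
  have fe: "inv (linpart s \<circ> w) \<circ> (s \<circ> y \<circ> frob \<sigma> s) \<circ> frob \<sigma> (linpart s \<circ> w) = (\<lambda>v. T + u' v)"
  proof
    fix v
    define x where "x = inv \<sigma> v"
    have vx: "v = \<sigma> x" unfolding x_def by simp
    have "(s \<circ> y \<circ> frob \<sigma> s) (frob \<sigma> W v) = s (y (\<sigma> (s (W x))))"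
      unfolding frob_def x_def by simp
    also have "s (W x) = w x + lam" unfolding W_def using sr by simp
    also have "y (\<sigma> (w x + lam)) = t + w (u' v) + u (\<sigma> lam)"
      unfolding yd vx using linear_add[OF ls] linear_add[OF lu] key by (simp add: algebra_simps)
    also have "s (t + w (u' v) + u (\<sigma> lam)) = W (T + u' v)"
      unfolding sr W_def T_def using linear_add[OF lr] linear_add[OF lw] by (simp add: algebra_simps)
    finally have e: "(s \<circ> y \<circ> frob \<sigma> s) (frob \<sigma> W v) = W (T + u' v)" .
    have "(inv W \<circ> (s \<circ> y \<circ> frob \<sigma> s) \<circ> frob \<sigma> W) v = T + u' v"
      using e inv_f_f[OF bij_is_inj[OF bW]] by simp
    thus "(inv (linpart s \<circ> w) \<circ> (s \<circ> y \<circ> frob \<sigma> s) \<circ> frob \<sigma> (linpart s \<circ> w)) v = T + u' v"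
      unfolding lps W_def r_def by simp
  qed
  have part1: "inv (linpart s \<circ> w) \<circ> (s \<circ> y \<circ> frob \<sigma> s) \<circ> frob \<sigma> (linpart s \<circ> w) \<in> iw_sub L (refl_group J)"
    unfolding fe iw_sub_def using TL u'G by blast
  show ?thesis unfolding JWD_alcove_def using part1 part2 by blast
qed



end
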